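(* Let $x,t$ be formal variables. Then, as formal power series in $t$ with coefficients polynomial in $x$, $$\sum_{n\ge 1}\sum_{[\pi]\in\mathfrak{C}_n^o}x^{\operatorname{drop}_{oo}([\pi])}t^n = \sum_{m\ge 1}\frac{m!(m-1)!\,t^{2m}}{\prod_{k=1}^m \big(1+k^2(1-x)t^2\big)}+\sum_{m\ge 1}\frac{\big((m-1)!\big)^2t^{2m-1}}{\prod_{k=1}^m \big(1+k^2(1-x)t^2\big)}.$$
   Context: For $n\ge1$, a cycle on $[n]=\{1,\dots,n\}$ is an equivalence class $[\pi]$ of permutations $\pi=\pi_1\cdots\pi_n$ of $[n]$ (in one-line notation) under cyclic rotation of the entries; the set of cycles on $[n]$ is $\mathfrak{C}_n$. Each cycle is represented by the permutation $\pi$ with $\pi_1=1$, and indices are read modulo $n$ (so $\pi_{n+1}=\pi_1$). A drop of $[\pi]$ is a consecutive pair $(\pi_i,\pi_{i+1})$, $1\le i\le n$, with $\pi_i>\pi_{i+1}$; drops do not depend on the choice of rotation. By convention, the unique cycle $[(1)]\in\mathfrak{C}_1$ has exactly one drop $(\star,1)$, where $\star$ is considered neither even nor odd. A drop $(a,b)$ is odd-odd if $a$ and $b$ are both odd, and even-odd if $a$ is even and $b$ is odd. $\operatorname{drop}_{oo}([\pi])$ and $\operatorname{drop}_{eo}([\pi])$ denote the numbers of odd-odd and even-odd drops of $[\pi]$, respectively. Finally $\mathfrak{C}_n^o$ is the set of cycles $[\pi]\in\mathfrak{C}_n$ such that for every drop $(\pi_i,\pi_{i+1})$ of $[\pi]$,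 the entry $\pi_{i+1}$ is odd. *)

theory Defs
  imports "HOL-Computational_Algebra.Formal_Power_Series" "HOL-Computational_Algebra.Polynomial"
begin

text \<open>Cycles on [n] are represented by their unique representative permutation
  (in one-line notation, as a list) whose first entry is 1.\<close>
definition cycle_reps :: "nat \<Rightarrow> nat list set" where
  "cycle_reps n = {xs. n \<ge> 1 \<and> distinct xs \<and> set xs = {1..n} \<and> hd xs = 1}"

definition cyc_next :: "nat list \<Rightarrow> nat \<Rightarrow> nat" where
  "cyc_next xs i = xs ! ((i + 1) mod length xs)"

definition drops :: "nat list \<Rightarrow> (nat \<times> nat) list" where
  "drops xs = [(xs ! i, cyc_next xs i). i \<leftarrow> [0..<length xs], xs ! i > cyc_next xs i]"

definition drop_oo :: "nat list \<Rightarrow> nat" where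
  "drop_oo xs = length (filter (\<lambda>(a,b). odd a \<and> odd b) (drops xs))"

text \<open>The set C_n^o: every drop ends in an odd entry.  (For n = 1 the conventional
  drop (star,1) ends in 1, which is odd, so [1] belongs to it; it contributes no
  odd-odd drop.)\<close>
definition cycles_odd :: "nat \<Rightarrow> nat list set" where
  "cycles_odd n = {xs \<in> cycle_reps n. \<forall>(a,b) \<in> set (drops xs). odd b}"

abbreviation polyX :: "int poly" where "polyX \<equiv> [:0, 1:]"

definition lhs_gf :: "int poly fps" where
  "lhs_gf = Abs_fps (\<lambda>n. \<Sum>xs\<in>cycles_odd n. polyX ^ drop_oo xs)"

definition denom :: "nat \<Rightarrow> int poly fps" where
  "denom m = (\<Prod>k = 1..m. 1 + fps_const (of_nat (k^2) * (1 - polyX)) * fps_X ^ 2)"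

text \<open>Its multiplicative inverse in the power series ring (library construction of
  the inverse of a series whose constant term is invertible; here with inverse 1).\<close>
definition denom_inv :: "nat \<Rightarrow> int poly fps" where
  "denom_inv m = fps_right_inverse (denom m) 1"

definition termA :: "nat \<Rightarrow> int poly fps" where
  "termA m = fps_const (of_nat (fact m * fact (m - 1))) * fps_X ^ (2 * m) * denom_inv m"

definition termB :: "nat \<Rightarrow> int poly fps" where
  "termB m = fps_const (of_nat ((fact (m - 1))^2)) * fps_X ^ (2 * m - 1) * denom_inv m"

end

theory Submission
  imports Defs
begin


definition cp :: "nat list \<Rightarrow> (nat \<times> nat) list" where
  "cp xs = zip xs (rotate1 xs)"

lemma cp_nth: "cp xs = map (\<lambda>i. (xs ! i, cyc_next xs i)) [0..<length xs]"
  unfolding cp_def cyc_next_def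
  by (rule nth_equalityI) (auto simp: nth_rotate1)

lemma drops_cp: "drops xs = filter (\<lambda>(a,b). b < a) (cp xs)"
proof -
  have g: "concat (map (\<lambda>i. if P i then [f i] else []) ys) = map f (filter P ys)" for P f and ys :: "nat list"
    by (induction ys) auto
  show ?thesis unfolding drops_def cp_nth g by (simp add: filter_map o_def)
qed

lemma length_cp[simp]: "length (cp xs) = length xs"
  by (simp add: cp_def)

lemma cp_rotate1: "cp (rotate1 xs) = rotate1 (cp xs)"
proof (cases "xs = []")
  case True then show ?thesis by (simp add: cp_def)
next
  case False
  then have ne: "xs \<noteq> []" .
  show ?thesis
  proof (rule nth_equalityI)
    fix i assume "i < length (cp (rotate1 xs))"
    then have i: "i < length xs" by simp
    then have "0 < length xs" by (cases xs) auto
    then have "Suc i mod length xs < length xs" by simp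
    then show "cp (rotate1 xs) ! i = rotate1 (cp xs) ! i"
      using i ne by (auto simp add: cp_def nth_rotate1 mod_Suc_eq)
  qed simp
qed

lemma cp_rotate: "cp (rotate k xs) = rotate k (cp xs)"
  by (induction k) (simp_all add: cp_rotate1)

lemma mset_cp_rotate: "mset (cp (rotate k xs)) = mset (cp xs)"
proof -
  have "mset (rotate k ys) = mset ys" for ys :: "(nat*nat) list"
  proof (induction k)
    case (Suc k)
    have "mset (rotate1 zs) = mset zs" for zs :: "(nat*nat) list"
      by (cases zs) (simp_all add: add.commute)
    then show ?case using Suc by simp
  qed simp
  then show ?thesis by (simp add: cp_rotate)
qed

lemma cp_ne: "w \<noteq> [] \<Longrightarrow> cp w = zip (butlast w) (tl w) @ [(last w, hd w)]"
proof -
  assume w: "w \<noteq> []"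
  have "cp w = zip (butlast w @ [last w]) (tl w @ [hd w])"
    using w by (simp add: cp_def rotate1_hd_tl)
  also have "\<dots> = zip (butlast w) (tl w) @ [(last w, hd w)]"
    by (subst zip_append) simp_all
  finally show ?thesis .
qed

definition ins :: "nat list \<Rightarrow> nat \<Rightarrow> nat \<Rightarrow> nat list" where
  "ins ys i n = take (Suc i) ys @ n # drop (Suc i) ys"

lemma cp_ins:
  assumes ne: "ys \<noteq> []" and i: "i < length ys"
  shows "mset (cp (ins ys i n)) + {#(ys!i, rotate1 ys ! i)#} =
         mset (cp ys) + {#(ys!i, n), (n, rotate1 ys ! i)#}"
proof -
  define u where "u = take (Suc i) ys"
  define v where "v = drop (Suc i) ys"
  define w where "w = v @ u"
  have lu: "length u = Suc i" using i by (simp add: u_def)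
  have une: "u \<noteq> []" using lu by auto
  have wne: "w \<noteq> []" using une by (simp add: w_def)
  have lastw: "last w = ys ! i"
    using une i by (simp add: w_def u_def take_Suc_conv_app_nth)
  have hdw: "hd w = rotate1 ys ! i"
  proof (cases "Suc i < length ys")
    case True
    then show ?thesis using i ne by (simp add: w_def v_def nth_rotate1 hd_drop_conv_nth)
  next
    case False
    then have "Suc i = length ys" using i by simp
    then show ?thesis using i ne
      by (simp add: w_def v_def u_def nth_rotate1 hd_conv_nth)
  qed
  have "mset (cp (ins ys i n)) = mset (cp (rotate (length u) (u @ (n # v))))"
    by (simp add: mset_cp_rotate ins_def u_def v_def)
  also have "\<dots> = mset (cp (n # w))" by (simp only: rotate_append w_def) simp
  also have "cp (n # w) = (n, hd w) # zip (butlast w) (tl w) @ [(last w, n)]"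
  proof -
    have "cp (n # w) = zip (n # butlast w) w @ [(last w, n)]"
      using wne by (simp add: cp_ne)
    also have "zip (n # butlast w) w = (n, hd w) # zip (butlast w) (tl w)"
      using wne by (cases w) auto
    finally show ?thesis by simp
  qed
  finally have A: "mset (cp (ins ys i n)) = mset ((n, hd w) # zip (butlast w) (tl w) @ [(last w, n)])" .
  have "mset (cp ys) = mset (cp (rotate (length u) (u @ v)))"
    by (simp add: mset_cp_rotate u_def v_def)
  also have "\<dots> = mset (cp w)" by (simp only: rotate_append w_def)
  also have "cp w = zip (butlast w) (tl w) @ [(last w, hd w)]" using wne by (simp add: cp_ne)
  finally have B: "mset (cp ys) = mset (zip (butlast w) (tl w) @ [(last w, hd w)])" .
  show ?thesis unfolding A B lastw [symmetric] hdw [symmetric] by simp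
qed

definition Poo :: "nat \<times> nat \<Rightarrow> bool" where
  "Poo p = (snd p < fst p \<and> odd (fst p) \<and> odd (snd p))"

lemma drop_oo_cp: "drop_oo xs = size (filter_mset Poo (mset (cp xs)))"
proof -
  have "drop_oo xs = length (filter Poo (cp xs))"
    unfolding drop_oo_def drops_cp filter_filter
    by (rule arg_cong[where f=length], rule filter_cong) (auto simp: Poo_def)
  then show ?thesis by (metis mset_filter size_mset)
qed

definition okc :: "nat list \<Rightarrow> bool" where
  "okc xs = (\<forall>p \<in> set (cp xs). snd p < fst p \<longrightarrow> odd (snd p))"

lemma cycles_odd_okc: "cycles_odd n = {xs \<in> cycle_reps n. okc xs}"
  unfolding cycles_odd_def okc_def drops_cp by auto

lemma set_cp: "p \<in> set (cp xs) \<Longrightarrow> fst p \<in> set xs \<and> snd p \<in> set xs"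
  unfolding cp_def by (cases p) (auto dest: set_zip_leftD set_zip_rightD)

lemma mset_rotate1: "mset (rotate1 zs) = mset zs"
  by (cases zs) (simp_all add: add.commute)

lemma cp_nth': "i < length xs \<Longrightarrow> cp xs ! i = (xs ! i, rotate1 xs ! i)"
  by (simp add: cp_def)

lemma card_odd: "card {v \<in> {1..m}. odd v} = Suc m div 2"
proof (induction m)
  case 0
  then show ?case by simp
next
  case (Suc m)
  have "{v \<in> {1..Suc m}. odd v} = {v \<in> {1..m}. odd v} \<union> (if odd (Suc m) then {Suc m} else {})"
    by (auto simp: le_Suc_eq)
  then show ?case using Suc by (auto simp: card_insert_if)
qed

lemma cycle_reps_length: "ys \<in> cycle_reps m \<Longrightarrow> length ys = m"
  unfolding cycle_reps_def by (metis (mono_tags) card_atLeastAtMost diff_Suc_1 distinct_card mem_Collect_eq)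

lemma oo_ins:
  assumes ys: "ys \<in> cycle_reps m" and i: "i < m" and b: "odd (rotate1 ys ! i)"
  shows "drop_oo (ins ys i (Suc m)) + (if Poo (ys!i, rotate1 ys ! i) then 1 else 0) =
         drop_oo ys + (if odd (Suc m) then 1 else 0)"
proof -
  have len: "length ys = m" using cycle_reps_length[OF ys] .
  have ne: "ys \<noteq> []" using i len by auto
  have setys: "set ys = {1..m}" using ys by (simp add: cycle_reps_def)
  have a: "ys ! i \<le> m" using i len setys nth_mem[of i ys] by auto
  have "rotate1 ys ! i \<in> set (rotate1 ys)" using i len by (intro nth_mem) simp
  then have bm: "rotate1 ys ! i \<le> m" using setys by auto
  from cp_ins[OF ne, of i "Suc m"] i len
  have "filter_mset Poo (mset (cp (ins ys i (Suc m))) + {#(ys!i, rotate1 ys ! i)#}) =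
        filter_mset Poo (mset (cp ys) + {#(ys!i, Suc m), (Suc m, rotate1 ys ! i)#})" by simp
  then have "size (filter_mset Poo (mset (cp (ins ys i (Suc m))) + {#(ys!i, rotate1 ys ! i)#})) =
        size (filter_mset Poo (mset (cp ys) + {#(ys!i, Suc m), (Suc m, rotate1 ys ! i)#}))" by simp
  then show ?thesis using a bm b unfolding drop_oo_cp by (auto simp: Poo_def)
qed

lemma ins_mem:
  assumes ys: "ys \<in> cycles_odd m" and i: "i < m" and b: "odd (rotate1 ys ! i)"
  shows "ins ys i (Suc m) \<in> cycles_odd (Suc m)"
proof -
  have ysr: "ys \<in> cycle_reps m" and ok: "okc ys" using ys by (auto simp: cycles_odd_okc)
  have len: "length ys = m" using cycle_reps_length[OF ysr] .
  have ne: "ys \<noteq> []" using i len by auto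
  have setys: "set ys = {1..m}" and dys: "distinct ys" and hdys: "hd ys = 1"
    using ysr by (auto simp: cycle_reps_def)
  define zs where "zs = ins ys i (Suc m)"
  have setzs: "set zs = set ys \<union> {Suc m}"
  proof -
    have "set zs = set (take (Suc i) ys) \<union> set (drop (Suc i) ys) \<union> {Suc m}"
      by (auto simp: zs_def ins_def)
    also have "set (take (Suc i) ys) \<union> set (drop (Suc i) ys) = set ys"
      by (metis append_take_drop_id set_append)
    finally show ?thesis .
  qed
  have setzs': "set zs = {1..Suc m}" using setzs setys by auto
  have lenzs: "length zs = Suc m" using len i by (simp add: zs_def ins_def)
  have dzs: "distinct zs"
    by (rule card_distinct) (simp add: setzs' lenzs)
  have hdzs: "hd zs = 1" using ne hdys by (simp add: zs_def ins_def)
  have a: "ys ! i \<le> m" using i len setys nth_mem[of i ys] by auto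
  have okz: "okc zs"
    unfolding okc_def
  proof (intro ballI impI)
    fix p assume p: "p \<in> set (cp zs)" and lt: "snd p < fst p"
    have "p \<in># mset (cp zs) + {#(ys!i, rotate1 ys ! i)#}" using p by simp
    moreover have "mset (cp zs) + {#(ys!i, rotate1 ys ! i)#} = mset (cp ys) + {#(ys!i, Suc m), (Suc m, rotate1 ys ! i)#}"
      using cp_ins[OF ne, of i "Suc m"] i len by (simp add: zs_def)
    ultimately have "p \<in># mset (cp ys) + {#(ys!i, Suc m), (Suc m, rotate1 ys ! i)#}"
      by metis
    then consider "p \<in> set (cp ys)" | "p = (ys!i, Suc m)" | "p = (Suc m, rotate1 ys ! i)"
      by auto
    then show "odd (snd p)"
    proof cases
      case 1 then show ?thesis using ok lt by (auto simp: okc_def)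
    next
      case 2 then show ?thesis using lt a by simp
    next
      case 3 then show ?thesis using b by simp
    qed
  qed
  show ?thesis unfolding zs_def[symmetric] cycles_odd_okc cycle_reps_def
    using dzs setzs' hdzs okz by simp
qed

definition rmv :: "nat \<Rightarrow> nat list \<Rightarrow> nat list \<times> nat" where
  "rmv n xs = (let p = length (takeWhile (\<lambda>x. x \<noteq> n) xs) in
               (take p xs @ drop (Suc p) xs, p - 1))"

lemma rmv_ins:
  assumes ys: "ys \<in> cycle_reps m" and i: "i < m"
  shows "rmv (Suc m) (ins ys i (Suc m)) = (ys, i)"
proof -
  have len: "length ys = m" using cycle_reps_length[OF ys] .
  have setys: "set ys = {1..m}" using ys by (simp add: cycle_reps_def)
  have nin: "Suc m \<notin> set (take (Suc i) ys)" using setys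
    by (metis atLeastAtMost_iff in_set_takeD lessI not_le)
  have tw: "takeWhile (\<lambda>x. x \<noteq> Suc m) (ins ys i (Suc m)) = take (Suc i) ys"
    unfolding ins_def using nin by (auto simp add: takeWhile_tail)
  have lt: "length (take (Suc i) ys) = Suc i" using i len by simp
  show ?thesis unfolding rmv_def Let_def tw lt unfolding ins_def using lt
    by simp
qed

lemma rmv_mem:
  assumes xs: "xs \<in> cycles_odd (Suc m)" and m: "m \<ge> 1"
  shows "fst (rmv (Suc m) xs) \<in> cycles_odd m \<and> snd (rmv (Suc m) xs) < m \<and>
         odd (rotate1 (fst (rmv (Suc m) xs)) ! snd (rmv (Suc m) xs)) \<and>
         ins (fst (rmv (Suc m) xs)) (snd (rmv (Suc m) xs)) (Suc m) = xs"
proof -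
  have xsr: "xs \<in> cycle_reps (Suc m)" and ok: "okc xs" using xs by (auto simp: cycles_odd_okc)
  have len: "length xs = Suc m" using cycle_reps_length[OF xsr] .
  have setxs: "set xs = {1..Suc m}" and dxs: "distinct xs" and hdxs: "hd xs = 1"
    using xsr by (auto simp: cycle_reps_def)
  define p where "p = length (takeWhile (\<lambda>x. x \<noteq> Suc m) xs)"
  have inx: "Suc m \<in> set xs" using setxs by auto
  have plt: "p < length xs"
  proof (rule ccontr)
    assume "\<not> p < length xs"
    then have "p = length xs" using length_takeWhile_le[of "\<lambda>x. x \<noteq> Suc m" xs] by (simp add: p_def)
    then have "takeWhile (\<lambda>x. x \<noteq> Suc m) xs = xs" unfolding p_def
      using takeWhile_eq_take[of "\<lambda>x. x \<noteq> Suc m" xs] by simp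
    then have "\<forall>x\<in>set xs. x \<noteq> Suc m" by (simp only: takeWhile_eq_all_conv)
    then show False using inx by blast
  qed
  have xp: "xs ! p = Suc m"
    using nth_length_takeWhile[of "\<lambda>x. x \<noteq> Suc m" xs] plt unfolding p_def by simp
  have p0: "p \<noteq> 0"
  proof
    assume "p = 0"
    then have "xs ! 0 = Suc m" using xp by simp
    moreover have "xs ! 0 = 1" using hdxs plt by (cases xs) auto
    ultimately show False using m by simp
  qed
  define t where "t = take p xs"
  define d where "d = drop (Suc p) xs"
  define ys where "ys = t @ d"
  define i where "i = p - 1"
  have rm: "rmv (Suc m) xs = (ys, i)" by (simp add: rmv_def Let_def p_def ys_def i_def t_def d_def)
  have xsdec: "xs = t @ Suc m # d"
    using id_take_nth_drop[OF plt] xp by (simp add: t_def d_def)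
  have lt: "length t = p" using plt by (simp add: t_def)
  have lenys: "length ys = m" using plt len by (simp add: ys_def t_def d_def)
  have ilt: "i < m" using plt len p0 by (simp add: i_def)
  have insx: "ins ys i (Suc m) = xs"
  proof -
    have "take (Suc i) ys = t" using p0 lt by (simp add: ys_def i_def)
    moreover have "drop (Suc i) ys = d" using p0 lt by (simp add: ys_def i_def)
    ultimately show ?thesis unfolding ins_def using xsdec by simp
  qed
  have D: "distinct (t @ Suc m # d)" using dxs xsdec by simp
  have dys: "distinct ys" using D by (simp add: ys_def)
  have nys: "Suc m \<notin> set ys" using D by (simp add: ys_def)
  have "set xs = set ys \<union> {Suc m}" using xsdec by (auto simp: ys_def)
  then have "set ys = set xs - {Suc m}" using nys by auto
  also have "\<dots> = {1..m}" using setxs by (auto simp: le_Suc_eq)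
  finally have setys: "set ys = {1..m}" .
  have ne: "ys \<noteq> []" using lenys m by auto
  have "t \<noteq> []" using lt p0 by auto
  then have hdys: "hd ys = 1" using hdxs xsdec by (simp add: ys_def hd_append)
  have a: "ys ! i \<le> m" using ilt lenys setys nth_mem[of i ys] by auto
  have "rotate1 ys ! i \<in> set (rotate1 ys)" using ilt lenys by (intro nth_mem) simp
  then have bm: "rotate1 ys ! i \<le> m" using setys by auto
  have eq: "mset (cp xs) + {#(ys!i, rotate1 ys ! i)#} = mset (cp ys) + {#(ys!i, Suc m), (Suc m, rotate1 ys ! i)#}"
    using cp_ins[OF ne, of i "Suc m"] ilt lenys insx by simp
  have "(Suc m, rotate1 ys ! i) \<in># mset (cp xs) + {#(ys!i, rotate1 ys ! i)#}"
    unfolding eq by simp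
  then have "(Suc m, rotate1 ys ! i) \<in> set (cp xs)" using a by auto
  then have bodd: "odd (rotate1 ys ! i)" using ok bm by (auto simp: okc_def)
  have oky: "okc ys"
    unfolding okc_def
  proof (intro ballI impI)
    fix q assume q: "q \<in> set (cp ys)" and lt: "snd q < fst q"
    have "q \<in># mset (cp ys) + {#(ys!i, Suc m), (Suc m, rotate1 ys ! i)#}" using q by simp
    then have "q \<in># mset (cp xs) + {#(ys!i, rotate1 ys ! i)#}" using eq by metis
    then consider "q \<in> set (cp xs)" | "q = (ys!i, rotate1 ys ! i)" by auto
    then show "odd (snd q)"
    proof cases
      case 1 then show ?thesis using ok lt by (auto simp: okc_def)
    next
      case 2 then show ?thesis using bodd by simp
    qed
  qed
  have "ys \<in> cycles_odd m" unfolding cycles_odd_okc cycle_reps_def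
    using m dys setys hdys oky by simp
  then show ?thesis unfolding rm using ilt bodd insx by simp
qed



definition Pn :: "nat \<Rightarrow> int poly" where
  "Pn n = (\<Sum>xs\<in>cycles_odd n. polyX ^ drop_oo xs)"

definition Lop :: "nat \<Rightarrow> int poly \<Rightarrow> int poly" where
  "Lop c p = of_nat c * p + (1 - polyX) * pderiv p"

lemma pderiv_X: "pderiv polyX = 1"
  by (simp add: pderiv_pCons)

lemma pderiv_X_pow_Suc: "pderiv (polyX ^ Suc k) = of_nat (Suc k) * polyX ^ k"
proof (induction k)
  case 0 then show ?case by (simp add: pderiv_X)
next
  case (Suc k)
  have "pderiv (polyX ^ Suc (Suc k)) = pderiv (polyX * polyX ^ Suc k)" by simp
  also have "\<dots> = polyX * pderiv (polyX ^ Suc k) + polyX ^ Suc k * pderiv polyX"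
    by (rule pderiv_mult)
  also have "\<dots> = of_nat (Suc (Suc k)) * polyX ^ Suc k"
    unfolding Suc pderiv_X by (simp add: algebra_simps)
  finally show ?case .
qed

lemma pderiv_X_pow: "pderiv (polyX ^ k) = of_nat k * polyX ^ (k - 1)"
proof (cases k)
  case 0 then show ?thesis by simp
next
  case (Suc j) then show ?thesis using pderiv_X_pow_Suc[of j] by simp
qed

lemma Lop_X_pow: "k \<le> c \<Longrightarrow> Lop c (polyX ^ k) = of_nat k * polyX ^ (k - 1) + of_nat (c - k) * polyX ^ k"
proof -
  assume kc: "k \<le> c"
  have "Lop c (polyX ^ k) = of_nat c * polyX ^ k + (1 - polyX) * (of_nat k * polyX ^ (k - 1))"
    by (simp add: Lop_def pderiv_X_pow)
  also have "(1 - polyX) * (of_nat k * polyX ^ (k - 1)) = of_nat k * polyX ^ (k - 1) - of_nat k * polyX ^ k"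
  proof (cases k)
    case 0 then show ?thesis by simp
  next
    case (Suc j) then show ?thesis by (simp add: algebra_simps)
  qed
  finally show ?thesis using kc by (simp add: of_nat_diff algebra_simps)
qed

lemma pderiv_sum': "finite A \<Longrightarrow> pderiv (\<Sum>x\<in>A. f x) = (\<Sum>x\<in>A. pderiv (f x))"
  by (induction A rule: finite_induct) (simp_all add: pderiv_add)

lemma Lop_sum: "finite A \<Longrightarrow> Lop c (\<Sum>x\<in>A. f x) = (\<Sum>x\<in>A. Lop c (f x))"
  by (simp add: Lop_def pderiv_sum' sum_distrib_left sum.distrib)

lemma finite_cycles_odd: "finite (cycles_odd n)"
proof -
  have "cycles_odd n \<subseteq> {xs. set xs \<subseteq> {1..n} \<and> length xs = n}"
    by (auto simp: cycles_odd_def cycle_reps_length) (auto simp: cycle_reps_def)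
  moreover have "finite {xs. set xs \<subseteq> {1..n} \<and> length xs = n}"
    by (rule finite_lists_length_eq) simp
  ultimately show ?thesis by (rule finite_subset)
qed

lemma length_filter_mset: "length (filter P xs) = size (filter_mset P (mset xs))"
  by (metis mset_filter size_mset)

lemma inner_sum:
  assumes ys: "ys \<in> cycles_odd m"
  shows "(\<Sum>i\<in>{i. i < m \<and> odd (rotate1 ys ! i)}. polyX ^ drop_oo (ins ys i (Suc m))) =
         polyX ^ (if odd (Suc m) then 1 else 0) * Lop (Suc m div 2) (polyX ^ drop_oo ys)"
proof -
  have ysr: "ys \<in> cycle_reps m" using ys by (simp add: cycles_odd_def)
  have len: "length ys = m" using cycle_reps_length[OF ysr] .
  have setys: "set ys = {1..m}" and dys: "distinct ys" using ysr by (auto simp: cycle_reps_def)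
  define I where "I = {i. i < m \<and> odd (rotate1 ys ! i)}"
  define I1 where "I1 = {i \<in> I. Poo (ys!i, rotate1 ys ! i)}"
  define k where "k = drop_oo ys"
  define e where "e = (if odd (Suc m) then 1 else 0 :: nat)"
  define c where "c = Suc m div 2"
  have finI: "finite I" by (simp add: I_def)
  have I1I: "I1 \<subseteq> I" by (auto simp: I1_def)
  have cardI1: "card I1 = k"
  proof -
    have "k = length (filter Poo (cp ys))" by (simp add: k_def drop_oo_cp length_filter_mset)
    also have "\<dots> = card {i. i < length (cp ys) \<and> Poo (cp ys ! i)}" by (rule length_filter_conv_card)
    also have "{i. i < length (cp ys) \<and> Poo (cp ys ! i)} = I1"
      using len by (auto simp: I1_def I_def cp_nth' Poo_def)
    finally show ?thesis by simp
  qed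
  have cardI: "card I = c"
  proof -
    have "card I = length (filter odd (rotate1 ys))"
      unfolding length_filter_conv_card I_def using len by simp
    also have "\<dots> = length (filter odd ys)" by (simp add: length_filter_mset mset_rotate1)
    also have "\<dots> = card (set (filter odd ys))" using dys by (metis distinct_card distinct_filter)
    also have "set (filter odd ys) = {v \<in> {1..m}. odd v}" using setys by auto
    finally show ?thesis using card_odd c_def by simp
  qed
  have kc: "k \<le> c" using card_mono[OF finI I1I] cardI1 cardI by simp
  have termeq: "polyX ^ drop_oo (ins ys i (Suc m)) =
      polyX ^ e * (if i \<in> I1 then polyX ^ (k - 1) else polyX ^ k)" if i: "i \<in> I" for i
  proof -
    have il: "i < m" and b: "odd (rotate1 ys ! i)" using i by (auto simp: I_def)
    have oo: "drop_oo (ins ys i (Suc m)) + (if Poo (ys!i, rotate1 ys ! i) then 1 else 0) = k + e"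
      using oo_ins[OF ysr il b] by (simp add: k_def e_def)
    show ?thesis
    proof (cases "i \<in> I1")
      case True
      then have "card I1 \<ge> 1" using finI I1I
        by (metis One_nat_def Suc_leI card_gt_0_iff empty_iff finite_subset)
      then have k1: "k \<ge> 1" using cardI1 by simp
      have "drop_oo (ins ys i (Suc m)) = e + (k - 1)" using oo True k1 by (simp add: I1_def)
      then show ?thesis using True by (simp add: power_add)
    next
      case False
      then have "drop_oo (ins ys i (Suc m)) = e + k" using oo i by (simp add: I1_def)
      then show ?thesis using False by (simp add: power_add)
    qed
  qed
  have "(\<Sum>i\<in>I. polyX ^ drop_oo (ins ys i (Suc m))) =
        (\<Sum>i\<in>I. polyX ^ e * (if i \<in> I1 then polyX ^ (k - 1) else polyX ^ k))"
    by (rule sum.cong) (simp_all add: termeq)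
  also have "\<dots> = polyX ^ e * (\<Sum>i\<in>I. (if i \<in> I1 then polyX ^ (k - 1) else polyX ^ k))"
    by (simp add: sum_distrib_left)
  also have "(\<Sum>i\<in>I. (if i \<in> I1 then polyX ^ (k - 1) else polyX ^ k)) =
       (\<Sum>i\<in>I1. polyX ^ (k - 1)) + (\<Sum>i\<in>I - I1. polyX ^ k)"
    using sum.If_cases[OF finI, of "\<lambda>i. i \<in> I1" "\<lambda>_. polyX ^ (k - 1)" "\<lambda>_. polyX ^ k"] I1I
    by (simp add: Int_absorb1 Diff_eq)
  also have "\<dots> = of_nat k * polyX ^ (k - 1) + of_nat (c - k) * polyX ^ k"
    using cardI1 cardI I1I finI card_Diff_subset[of I1 I] finite_subset[OF I1I finI] by simp
  also have "\<dots> = Lop c (polyX ^ k)" using Lop_X_pow[OF kc] by simp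
  finally show ?thesis by (simp add: I_def e_def c_def k_def)
qed

lemma P_rec:
  assumes m: "m \<ge> 1"
  shows "Pn (Suc m) = polyX ^ (if odd (Suc m) then 1 else 0) * Lop (Suc m div 2) (Pn m)"
proof -
  define S where "S = Sigma (cycles_odd m) (\<lambda>ys. {i. i < m \<and> odd (rotate1 ys ! i)})"
  define h where "h = (\<lambda>(ys, i). ins ys i (Suc m))"
  have bij: "bij_betw h S (cycles_odd (Suc m))"
  proof (rule bij_betw_byWitness[where f' = "rmv (Suc m)"])
    show "\<forall>a\<in>S. rmv (Suc m) (h a) = a"
    proof
      fix a assume "a \<in> S"
      then obtain ys i where a: "a = (ys, i)" and ys: "ys \<in> cycles_odd m" and i: "i < m"
        by (auto simp: S_def)
      have "ys \<in> cycle_reps m" using ys by (simp add: cycles_odd_def)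
      then show "rmv (Suc m) (h a) = a" using rmv_ins[OF _ i] by (simp add: a h_def)
    qed
    show "\<forall>a'\<in>cycles_odd (Suc m). h (rmv (Suc m) a') = a'"
    proof
      fix xs assume xs: "xs \<in> cycles_odd (Suc m)"
      obtain ys i where r: "rmv (Suc m) xs = (ys, i)" by (cases "rmv (Suc m) xs")
      show "h (rmv (Suc m) xs) = xs" using rmv_mem[OF xs m] unfolding r h_def by simp
    qed
    show "h ` S \<subseteq> cycles_odd (Suc m)"
      by (auto simp: S_def h_def ins_mem)
    show "rmv (Suc m) ` cycles_odd (Suc m) \<subseteq> S"
    proof
      fix z assume "z \<in> rmv (Suc m) ` cycles_odd (Suc m)"
      then obtain xs where xs: "xs \<in> cycles_odd (Suc m)" and z: "z = rmv (Suc m) xs" by auto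
      show "z \<in> S" using rmv_mem[OF xs m] unfolding z S_def by (cases "rmv (Suc m) xs") auto
    qed
  qed
  have "Pn (Suc m) = (\<Sum>z\<in>S. polyX ^ drop_oo (h z))"
    unfolding Pn_def by (rule sum.reindex_bij_betw[OF bij, symmetric])
  also have "\<dots> = (\<Sum>ys\<in>cycles_odd m. \<Sum>i\<in>{i. i < m \<and> odd (rotate1 ys ! i)}. polyX ^ drop_oo (ins ys i (Suc m)))"
  proof -
    have e: "(\<lambda>z. polyX ^ drop_oo (h z)) = (\<lambda>(ys,i). polyX ^ drop_oo (ins ys i (Suc m)))"
      by (auto simp: h_def fun_eq_iff)
    show ?thesis unfolding e S_def
      by (rule sum.Sigma[symmetric]) (auto simp: finite_cycles_odd)
  qed
  also have "\<dots> = (\<Sum>ys\<in>cycles_odd m. polyX ^ (if odd (Suc m) then 1 else 0) * Lop (Suc m div 2) (polyX ^ drop_oo ys))"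
    by (rule sum.cong) (simp_all add: inner_sum)
  also have "\<dots> = polyX ^ (if odd (Suc m) then 1 else 0) * Lop (Suc m div 2) (Pn m)"
    by (simp add: Pn_def Lop_sum finite_cycles_odd sum_distrib_left)
  finally show ?thesis .
qed


lemma drops1: "drops [1] = []"
  by (simp add: drops_def cyc_next_def)

lemma P0: "Pn 0 = 0"
  by (auto simp: Pn_def cycles_odd_def cycle_reps_def)

lemma P1: "Pn 1 = 1"
proof -
  have "cycles_odd 1 = {[1]}"
  proof
    have "[1] \<in> cycle_reps 1" by (simp add: cycle_reps_def)
    then show "{[1]} \<subseteq> cycles_odd 1"
      using drops1 by (simp add: cycles_odd_def)
    show "cycles_odd 1 \<subseteq> {[1]}"
    proof
      fix xs assume "xs \<in> cycles_odd 1"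
      then have xr: "xs \<in> cycle_reps 1" by (simp add: cycles_odd_def)
      then have "length xs = 1" by (rule cycle_reps_length)
      moreover have "hd xs = 1" using xr by (simp add: cycle_reps_def)
      ultimately show "xs \<in> {[1]}" by (cases xs) auto
    qed
  qed
  moreover have "drop_oo [1] = 0" using drops1 by (simp add: drop_oo_def)
  ultimately show ?thesis by (simp add: Pn_def)
qed



fun H :: "nat \<Rightarrow> nat \<Rightarrow> nat" where
  "H 0 j = (if j = 0 then 1 else 0)"
| "H (Suc m) 0 = 1"
| "H (Suc m) (Suc j) = H m (Suc j) + (Suc m)^2 * H (Suc m) j"

lemma H_0_right[simp]: "H m 0 = 1"
  by (cases m) simp_all

abbreviation Y :: "int poly" where "Y \<equiv> polyX - 1"

lemma pderiv_Y_pow: "pderiv (Y ^ k) = of_nat k * Y ^ (k - 1)"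
proof (cases k)
  case 0 then show ?thesis by simp
next
  case (Suc j)
  have "pderiv Y = 1" by (simp add: pderiv_diff pderiv_X)
  then have "pderiv (Y ^ Suc j) = smult (of_nat (Suc j)) (Y ^ j) * 1"
    by (simp only: pderiv_power_Suc)
  also have "\<dots> = of_nat (Suc j) * Y ^ j" by (simp only: mult_1_right of_nat_mult_conv_smult)
  finally show ?thesis using Suc by simp
qed

lemma gen_aux1:
  fixes x :: "'a::comm_ring_1"
  shows "(1 - x) * (of_nat j * (x - 1) ^ (j - 1)) = - (of_nat j * (x - 1) ^ j)"
proof (cases j)
  case 0 then show ?thesis by simp
next
  case (Suc i) then show ?thesis by (simp add: algebra_simps)
qed

lemma gen_aux2:
  fixes x :: "'a::comm_ring_1"
  assumes "j \<le> c"
  shows "of_nat c * (of_nat a * (x - 1) ^ j) + (1 - x) * (of_nat a * (of_nat j * (x - 1) ^ (j - 1)))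
     = of_nat (a * (c - j)) * (x - 1) ^ j"
proof -
  have "(1 - x) * (of_nat a * (of_nat j * (x - 1) ^ (j - 1))) = of_nat a * ((1 - x) * (of_nat j * (x - 1) ^ (j - 1)))"
    by (simp add: algebra_simps)
  also have "\<dots> = - (of_nat a * of_nat j * (x - 1) ^ j)" by (simp only: gen_aux1) (simp add: algebra_simps)
  finally show ?thesis using assms by (simp add: of_nat_diff algebra_simps)
qed

lemma Lop_Y: "j \<le> c \<Longrightarrow> Lop c (of_nat a * Y ^ j) = of_nat (a * (c - j)) * Y ^ j"
proof -
  assume jc: "j \<le> c"
  have pd: "pderiv (of_nat a * Y ^ j) = of_nat a * (of_nat j * Y ^ (j - 1))"
    by (simp only: of_nat_mult_conv_smult pderiv_smult pderiv_Y_pow)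
  show ?thesis unfolding Lop_def pd by (rule gen_aux2[OF jc])
qed

definition EV :: "nat \<Rightarrow> int poly" where
  "EV N = (\<Sum>m<N. of_nat (fact (Suc m) * fact m * H (Suc m) (N - Suc m)) * Y ^ (N - Suc m))"

definition OD :: "nat \<Rightarrow> int poly" where
  "OD N = (\<Sum>m<N. of_nat (fact m ^ 2 * H (Suc m) (N - Suc m)) * Y ^ (N - Suc m))"

lemma LE: "Lop N (OD N) = EV N"
  unfolding OD_def EV_def
proof (subst Lop_sum, simp, rule sum.cong, simp)
  fix m assume "m \<in> {..<N}"
  then have m: "m < N" by simp
  have "Lop N (of_nat (fact m ^ 2 * H (Suc m) (N - Suc m)) * Y ^ (N - Suc m)) =
        of_nat (fact m ^ 2 * H (Suc m) (N - Suc m) * (N - (N - Suc m))) * Y ^ (N - Suc m)"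
    by (rule Lop_Y) simp
  also have "fact m ^ 2 * H (Suc m) (N - Suc m) * (N - (N - Suc m)) = fact (Suc m) * fact m * H (Suc m) (N - Suc m)"
    using m by (simp add: power2_eq_square algebra_simps)
  finally show "Lop N (of_nat (fact m ^ 2 * H (Suc m) (N - Suc m)) * Y ^ (N - Suc m)) =
        of_nat (fact (Suc m) * fact m * H (Suc m) (N - Suc m)) * Y ^ (N - Suc m)" .
qed

lemma LO1: "Lop N (EV N) = (\<Sum>m<N. of_nat (fact (Suc m) ^ 2 * H (Suc m) (N - Suc m)) * Y ^ (N - Suc m))"
  unfolding EV_def
proof (subst Lop_sum, simp, rule sum.cong, simp)
  fix m assume "m \<in> {..<N}"
  then have m: "m < N" by simp
  have "Lop N (of_nat (fact (Suc m) * fact m * H (Suc m) (N - Suc m)) * Y ^ (N - Suc m)) =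
        of_nat (fact (Suc m) * fact m * H (Suc m) (N - Suc m) * (N - (N - Suc m))) * Y ^ (N - Suc m)"
    by (rule Lop_Y) simp
  also have "fact (Suc m) * fact m * H (Suc m) (N - Suc m) * (N - (N - Suc m)) = fact (Suc m) ^ 2 * H (Suc m) (N - Suc m)"
    using m by (simp add: power2_eq_square algebra_simps)
  finally show "Lop N (of_nat (fact (Suc m) * fact m * H (Suc m) (N - Suc m)) * Y ^ (N - Suc m)) =
        of_nat (fact (Suc m) ^ 2 * H (Suc m) (N - Suc m)) * Y ^ (N - Suc m)" .
qed

lemma gen_aux3:
  fixes x s :: "'a::comm_ring_1"
  shows "x * s = s + (x - 1) * s"
  by (simp add: algebra_simps)

lemma LO:
  assumes N: "N \<ge> 1"
  shows "polyX * Lop N (EV N) = OD (Suc N)"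
proof -
  define F where "F m = (of_nat (fact (Suc m) ^ 2 * H (Suc m) (N - Suc m)) * Y ^ (N - Suc m) :: int poly)" for m
  define g where "g k = (of_nat (fact k ^ 2 * H (Suc k) (N - k)) * Y ^ (N - k) :: int poly)" for k
  define a where "a k = (of_nat (fact k ^ 2 * H k (N - k)) * Y ^ (N - k) :: int poly)" for k
  have L: "Lop N (EV N) = (\<Sum>m<N. F m)" unfolding LO1 F_def by simp
  have O: "OD (Suc N) = (\<Sum>k<Suc N. g k)" unfolding OD_def g_def by simp
  have split: "g k = a k + Y * F k" if k: "k < N" for k
  proof -
    define j where "j = N - Suc k"
    have Nk: "N - k = Suc j" using k by (simp add: j_def)
    have nat_eq: "fact k ^ 2 * H (Suc k) (N - k) = fact k ^ 2 * H k (N - k) + fact (Suc k) ^ 2 * H (Suc k) j"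
      unfolding Nk by (simp add: power2_eq_square algebra_simps)
    have "g k = of_nat (fact k ^ 2 * H k (N - k)) * Y ^ (N - k) + of_nat (fact (Suc k) ^ 2 * H (Suc k) j) * (Y * Y ^ j)"
      unfolding g_def nat_eq of_nat_add distrib_right by (simp only: Nk power_Suc)
    also have "\<dots> = a k + Y * F k" unfolding a_def F_def j_def[symmetric] by (simp only: mult_ac)
    finally show ?thesis .
  qed
  have gN: "g N = a N" by (simp add: g_def a_def)
  have a0: "a 0 = 0" using N by (cases N) (simp_all add: a_def)
  have "(\<Sum>k<Suc N. g k) = (\<Sum>k<N. g k) + a N" by (simp add: gN)
  also have "(\<Sum>k<N. g k) = (\<Sum>k<N. a k) + Y * (\<Sum>k<N. F k)"
    by (simp add: split sum.distrib sum_distrib_left)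
  also have "(\<Sum>k<N. a k) + Y * (\<Sum>k<N. F k) + a N = (\<Sum>k<Suc N. a k) + Y * (\<Sum>k<N. F k)"
    by simp
  also have "(\<Sum>k<Suc N. a k) = a 0 + (\<Sum>k<N. a (Suc k))" by (rule sum.lessThan_Suc_shift)
  also have "(\<Sum>k<N. a (Suc k)) = (\<Sum>k<N. F k)"
    by (rule sum.cong) (simp_all add: a_def F_def)
  finally have "OD (Suc N) = (\<Sum>k<N. F k) + Y * (\<Sum>k<N. F k)" using O a0 by simp
  then show ?thesis unfolding L by (simp only: gen_aux3[of polyX])
qed

lemma closed: "Pn (2*N+1) = OD (Suc N) \<and> Pn (2*N+2) = EV (Suc N)"
proof (induction N)
  case 0
  have p1: "Pn 1 = OD 1" using P1 by (simp add: OD_def)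
  have "Pn 2 = Lop 1 (Pn 1)" using P_rec[of 1] by (simp add: numeral_2_eq_2)
  then have "Pn 2 = EV 1" using LE[of 1] p1 by simp
  then show ?case using p1 by (simp add: numeral_2_eq_2)
next
  case (Suc N)
  have a: "Pn (2 * Suc N + 1) = polyX * Lop (Suc N) (Pn (2 * N + 2))"
    using P_rec[of "2 * N + 2"] by simp
  have a': "Pn (2 * Suc N + 1) = OD (Suc (Suc N))"
    unfolding a using Suc.IH LO[of "Suc N"] by simp
  have b: "Pn (2 * Suc N + 2) = Lop (Suc (Suc N)) (Pn (2 * Suc N + 1))"
    using P_rec[of "2 * N + 3"] by (simp add: numeral_3_eq_3)
  have b': "Pn (2 * Suc N + 2) = EV (Suc (Suc N))"
    unfolding b a' by (rule LE)
  show ?case using a' b' by simp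
qed



unbundle fps_syntax

definition G :: "nat \<Rightarrow> int poly fps" where
  "G m = Abs_fps (\<lambda>k. if even k then of_nat (H m (k div 2)) * Y ^ (k div 2) else 0)"

lemma G_nth: "G m $ k = (if even k then of_nat (H m (k div 2)) * Y ^ (k div 2) else 0)"
  by (simp add: G_def)

definition fac :: "nat \<Rightarrow> int poly fps" where
  "fac k = 1 + fps_const (of_nat (k^2) * (1 - polyX)) * fps_X ^ 2"

lemma gen_aux4:
  fixes x :: "'a::comm_ring_1"
  shows "of_nat (h1 + s * h2) * (x - 1) ^ Suc i + of_nat s * (1 - x) * (of_nat h2 * (x - 1) ^ i)
         = of_nat h1 * (x - 1) ^ Suc i"
  by (simp add: algebra_simps)

lemma fac_G: "fac (Suc m) * G (Suc m) = G m"
proof (rule fps_ext)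
  fix k
  have "(fac (Suc m) * G (Suc m)) $ k =
        G (Suc m) $ k + of_nat (Suc m ^ 2) * (1 - polyX) * (if k < 2 then 0 else G (Suc m) $ (k - 2))"
    unfolding fac_def by (simp add: distrib_right mult.assoc fps_X_power_mult_nth)
  also have "\<dots> = G m $ k"
  proof (cases "even k")
    case False
    then show ?thesis by (auto simp: G_nth)
  next
    case True
    then obtain j where k: "k = 2 * j" by auto
    show ?thesis
    proof (cases j)
      case 0 then show ?thesis using k by (simp add: G_nth)
    next
      case (Suc i)
      have k2: "k - 2 = 2 * i" using k Suc by simp
      have "G (Suc m) $ k + of_nat (Suc m ^ 2) * (1 - polyX) * G (Suc m) $ (k - 2)
         = of_nat (H m (Suc i) + Suc m ^ 2 * H (Suc m) i) * Y ^ Suc i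
           + of_nat (Suc m ^ 2) * (1 - polyX) * (of_nat (H (Suc m) i) * Y ^ i)"
        unfolding k2 unfolding k Suc by (simp add: G_nth del: power_Suc)
      also have "\<dots> = of_nat (H m (Suc i)) * Y ^ Suc i" by (rule gen_aux4)
      finally show ?thesis using k Suc by (simp add: G_nth del: power_Suc)
    qed
  qed
  finally show "(fac (Suc m) * G (Suc m)) $ k = G m $ k" .
qed

lemma G0: "G 0 = 1"
  by (rule fps_ext) (auto simp: G_nth)

lemma denom_G: "denom m * G m = 1"
proof (induction m)
  case 0 then show ?case by (simp add: denom_def G0)
next
  case (Suc m)
  have "denom (Suc m) = denom m * fac (Suc m)"
    unfolding denom_def fac_def by (simp add: prod.cl_ivl_Suc)
  then have "denom (Suc m) * G (Suc m) = denom m * (fac (Suc m) * G (Suc m))"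
    by (simp add: mult.assoc)
  then show ?case using Suc fac_G by simp
qed

lemma denom_inv_G: "denom_inv m = G m"
proof -
  have d0: "denom m $ 0 = 1"
  proof -
    have "(denom m * G m) $ 0 = 1" by (simp add: denom_G)
    then show ?thesis by (simp add: G_nth)
  qed
  have R: "denom m * denom_inv m = 1"
    unfolding denom_inv_def by (rule fps_right_inverse) (simp add: d0)
  have "G m = G m * (denom m * denom_inv m)" by (simp add: R)
  also have "\<dots> = (denom m * G m) * denom_inv m" by (simp add: mult_ac)
  finally show ?thesis by (simp add: denom_G)
qed

lemma fps_sums_lemma:
  fixes f :: "nat \<Rightarrow> 'a::comm_ring_1 fps"
  assumes z: "\<And>i k. k < i \<Longrightarrow> f i $ k = 0"
  shows "f sums Abs_fps (\<lambda>k. \<Sum>i\<le>k. f i $ k)"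
  unfolding sums_def
proof (rule tendsto_fpsI)
  fix k
  show "\<forall>\<^sub>F n in sequentially. (\<Sum>i<n. f i) $ k = Abs_fps (\<lambda>k. \<Sum>i\<le>k. f i $ k) $ k"
  proof (rule eventually_sequentiallyI[of "Suc k"])
    fix n assume n: "Suc k \<le> n"
    have "(\<Sum>i<n. f i) $ k = (\<Sum>i<n. f i $ k)" by (simp add: fps_sum_nth)
    also have "\<dots> = (\<Sum>i\<le>k. f i $ k)"
    proof (rule sum.mono_neutral_right)
      show "{..k} \<subseteq> {..<n}" using n by auto
      show "\<forall>i\<in>{..<n} - {..k}. f i $ k = 0" using z by auto
    qed simp
    finally show "(\<Sum>i<n. f i) $ k = Abs_fps (\<lambda>k. \<Sum>i\<le>k. f i $ k) $ k" by simp
  qed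
qed

lemma termA_nth: "termA (Suc i) $ k =
   (if k < 2 * Suc i then 0 else of_nat (fact (Suc i) * fact i) * G (Suc i) $ (k - 2 * Suc i))"
  unfolding termA_def denom_inv_G by (auto simp: mult.assoc fps_X_power_mult_nth)

lemma termB_nth: "termB (Suc i) $ k =
   (if k < 2 * i + 1 then 0 else of_nat (fact i ^ 2) * G (Suc i) $ (k - (2 * i + 1)))"
  unfolding termB_def denom_inv_G by (auto simp: mult.assoc fps_X_power_mult_nth)

lemma sum_restrict: "N \<le> n \<Longrightarrow> (\<Sum>i\<le>n. if i \<le> N then t i else 0) = (\<Sum>i<Suc N. t i)"
proof -
  assume Nn: "N \<le> n"
  have "(\<Sum>i\<le>n. if i \<le> N then t i else 0) = (\<Sum>i\<in>{i\<in>{..n}. i \<le> N}. t i)"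
    by (rule sum.inter_filter[symmetric]) simp
  also have "{i\<in>{..n}. i \<le> N} = {..<Suc N}" using Nn by auto
  finally show ?thesis .
qed

lemma coeff_match: "Pn n = (\<Sum>i\<le>n. termA (Suc i) $ n) + (\<Sum>i\<le>n. termB (Suc i) $ n)"
proof -
  consider "n = 0" | N where "n = 2 * N + 1" | N where "n = 2 * N + 2"
  proof -
    have "n = 0 \<or> (\<exists>N. n = 2 * N + 1) \<or> (\<exists>N. n = 2 * N + 2)" by presburger
    then show ?thesis using that by blast
  qed
  then show ?thesis
  proof cases
    case 1
    then show ?thesis by (simp add: P0 termA_nth termB_nth)
  next
    case (2 N)
    have A: "termA (Suc i) $ n = 0" for i
      using 2 by (auto simp: termA_nth G_nth)
    have B: "termB (Suc i) $ n = (if i \<le> N then of_nat (fact i ^ 2 * H (Suc i) (Suc N - Suc i)) * Y ^ (Suc N - Suc i) else 0)" for i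
    proof (cases "i \<le> N")
      case True
      have e: "n - (2 * i + 1) = 2 * (N - i)" using 2 True by simp
      show ?thesis using True 2 unfolding termB_nth e by (simp add: G_nth)
    next
      case False then show ?thesis using 2 by (simp add: termB_nth)
    qed
    have "(\<Sum>i\<le>n. termB (Suc i) $ n) = OD (Suc N)"
      unfolding B OD_def by (rule sum_restrict) (simp add: 2)
    moreover have "(\<Sum>i\<le>n. termA (Suc i) $ n) = 0" by (simp only: A sum.neutral_const)
    ultimately show ?thesis using closed[of N] 2 by simp
  next
    case (3 N)
    have B: "termB (Suc i) $ n = 0" for i
    proof -
      have "odd (n - (2 * i + 1))" if "\<not> n < 2 * i + 1" using that 3 by presburger
      then show ?thesis by (auto simp: termB_nth G_nth)
    qed
    have A: "termA (Suc i) $ n = (if i \<le> N then of_nat (fact (Suc i) * fact i * H (Suc i) (Suc N - Suc i)) * Y ^ (Suc N - Suc i) else 0)" for i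
    proof (cases "i \<le> N")
      case True
      have e: "n - 2 * Suc i = 2 * (N - i)" using 3 True by simp
      show ?thesis using True 3 unfolding termA_nth e by (simp add: G_nth)
    next
      case False then show ?thesis using 3 by (simp add: termA_nth)
    qed
    have "(\<Sum>i\<le>n. termA (Suc i) $ n) = EV (Suc N)"
      unfolding A EV_def by (rule sum_restrict) (simp add: 3)
    moreover have "(\<Sum>i\<le>n. termB (Suc i) $ n) = 0" by (simp only: B sum.neutral_const)
    ultimately show ?thesis using closed[of N] 3 by simp
  qed
qed

theorem theorem1p2:
  shows "summable (\<lambda>m. termA (Suc m)) \<and> summable (\<lambda>m. termB (Suc m)) \<and>
         lhs_gf = (\<Sum>m. termA (Suc m)) + (\<Sum>m. termB (Suc m))"
proof -
  have sA: "(\<lambda>m. termA (Suc m)) sums Abs_fps (\<lambda>k. \<Sum>i\<le>k. termA (Suc i) $ k)"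
    by (rule fps_sums_lemma) (simp add: termA_nth)
  have sB: "(\<lambda>m. termB (Suc m)) sums Abs_fps (\<lambda>k. \<Sum>i\<le>k. termB (Suc i) $ k)"
    by (rule fps_sums_lemma) (simp add: termB_nth)
  have "lhs_gf = Abs_fps (\<lambda>k. \<Sum>i\<le>k. termA (Suc i) $ k) + Abs_fps (\<lambda>k. \<Sum>i\<le>k. termB (Suc i) $ k)"
  proof (rule fps_ext)
    fix n
    show "lhs_gf $ n = (Abs_fps (\<lambda>k. \<Sum>i\<le>k. termA (Suc i) $ k) + Abs_fps (\<lambda>k. \<Sum>i\<le>k. termB (Suc i) $ k)) $ n"
      using coeff_match[of n] by (simp add: lhs_gf_def Pn_def)
  qed
  moreover have "summable (\<lambda>m. termA (Suc m))" using sA by (rule sums_summable)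
  moreover have "summable (\<lambda>m. termB (Suc m))" using sB by (rule sums_summable)
  moreover have "(\<Sum>m. termA (Suc m)) = Abs_fps (\<lambda>k. \<Sum>i\<le>k. termA (Suc i) $ k)"
    using sA by (rule sums_unique[symmetric])
  moreover have "(\<Sum>m. termB (Suc m)) = Abs_fps (\<lambda>k. \<Sum>i\<le>k. termB (Suc i) $ k)"
    using sB by (rule sums_unique[symmetric])
  ultimately show ?thesis by simp
qed


end
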